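(* Let $\theta$ be a finite rooted tree with $n\ge1$ nodes, in which every node $v$ carries a type $\eta_v\in\{0,1,2,3\}$, subject to the constraint: no node of type $0$ or $1$ has exactly one child (immediately preceding node) with that child being of type $0$ or $1$. Let $N_i^1(\theta)$ be the number of internal nodes (nodes with at least one child) of type $1$ in $\theta$. Then $N_i^1(\theta)\le \frac{2n-1}{3}$.
   Context: In a rooted tree, the children of a node $v$ are the nodes immediately preceding $v$ (i.e. whose outgoing line enters $v$); end-nodes are nodes with no children and internal nodes are the others. All nodes, including the root node, are counted in $n$. *)

theory Defs
  imports Complex_Main
begin

text \<open>A node is represented as Node eta children, where eta is its type and
  children is the list of subtrees rooted at its children (the nodes immediately
  preceding it). The order of the list is irrelevant for all notions below.\<close>
datatype ttree = Node nat "ttree list"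

fun label :: "ttree \<Rightarrow> nat" where
  "label (Node e ts) = e"

fun children :: "ttree \<Rightarrow> ttree list" where
  "children (Node e ts) = ts"

fun nnodes :: "ttree \<Rightarrow> nat" where
  "nnodes (Node e ts) = 1 + sum_list (map nnodes ts)"

fun types_ok :: "ttree \<Rightarrow> bool" where
  "types_ok (Node e ts) = (e \<le> 3 \<and> (\<forall>t\<in>set ts. types_ok t))"

fun constraint_ok :: "ttree \<Rightarrow> bool" where
  "constraint_ok (Node e ts) =
     (\<not> (e \<in> {0,1} \<and> length ts = 1 \<and> label (hd ts) \<in> {0,1})
      \<and> (\<forall>t\<in>set ts. constraint_ok t))"

fun N_i1 :: "ttree \<Rightarrow> nat" where
  "N_i1 (Node e ts) = (if e = 1 \<and> ts \<noteq> [] then 1 else 0) + sum_list (map N_i1 ts)"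

end

theory Submission
  imports Defs
begin

lemma list_aux:
  "(\<forall>t\<in>set ts. 3 * N_i1 t + 1 \<le> 2 * nnodes t) \<Longrightarrow>
   3 * sum_list (map N_i1 ts) + length ts \<le> 2 * sum_list (map nnodes ts)"
  by (induction ts) auto

lemma main_aux:
  "constraint_ok t \<Longrightarrow> 3 * N_i1 t + 1 \<le> 2 * nnodes t \<and>
     (label t \<notin> {0,1} \<longrightarrow> 3 * N_i1 t + 2 \<le> 2 * nnodes t)"
proof (induction t)
  case (Node e ts)
  then have IH: "\<forall>t\<in>set ts. 3 * N_i1 t + 1 \<le> 2 * nnodes t \<and>
     (label t \<notin> {0,1} \<longrightarrow> 3 * N_i1 t + 2 \<le> 2 * nnodes t)" by auto
  then have L: "3 * sum_list (map N_i1 ts) + length ts \<le> 2 * sum_list (map nnodes ts)"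
    by (intro list_aux) auto
  show ?case
  proof (cases "e = 1 \<and> ts \<noteq> []")
    case False
    then show ?thesis using L by auto
  next
    case True
    show ?thesis
    proof (cases "length ts = 1")
      case False
      with True have "length ts \<ge> 2" by (metis One_nat_def Suc_1 Suc_leI length_greater_0_conv nat_less_le)
      then show ?thesis using L True by auto
    next
      case True1: True
      then obtain c where ts: "ts = [c]" by (cases ts) (auto simp: length_Suc_conv)
      with Node.prems True have "label c \<notin> {0,1}" by auto
      with IH ts have "3 * N_i1 c + 2 \<le> 2 * nnodes c" by auto
      then show ?thesis using ts True by auto
    qed
  qed
qed

theorem lemma2p1:
  fixes \<theta> :: ttree
  assumes "types_ok \<theta>" and "constraint_ok \<theta>"
  shows "real (N_i1 \<theta>) \<le> (2 * real (nnodes \<theta>) - 1) / 3"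
proof -
  have "3 * N_i1 \<theta> + 1 \<le> 2 * nnodes \<theta>" using main_aux[OF assms(2)] by auto
  then have "3 * real (N_i1 \<theta>) + 1 \<le> 2 * real (nnodes \<theta>)" by linarith
  then show ?thesis by (simp add: field_simps)
qed

end
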